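(* If $H$ is a minimal $Q$-triconnected graph, then the contracted version of $H$ is also a minimal $Q$-triconnected graph.
   Context: Two vertices are triconnected if there are three internally vertex-disjoint paths between them. $H$ is $Q$-triconnected if every pair of vertices of $Q$ is triconnected in $H$; it is minimal if deleting any edge or vertex violates this. The contracted version of $H$ is obtained by contracting edges incident to vertices of degree two until no vertex of degree two remains, so that every maximal path of $H$ whose internal vertices have degree two becomes a single edge (the resulting graph may have parallel edges). *)

theory Defs
  imports Main
begin

text \<open>Finite multigraphs (parallel edges and loops representable).  An edge e has
  end vertices ends e = (x, y), read as an unordered pair.\<close>

record ('v, 'e) mgraph =
  verts :: "'v set"
  edgs  :: "'e set"
  ends  :: "'e \<Rightarrow> 'v \<times> 'v"

definition wf_mgraph :: "('v, 'e) mgraph \<Rightarrow> bool" where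
  "wf_mgraph G \<longleftrightarrow> finite (verts G) \<and> finite (edgs G) \<and>
     (\<forall>e \<in> edgs G. fst (ends G e) \<in> verts G \<and> snd (ends G e) \<in> verts G)"

definition simple_mgraph :: "('v, 'e) mgraph \<Rightarrow> bool" where
  "simple_mgraph G \<longleftrightarrow>
     (\<forall>e \<in> edgs G. fst (ends G e) \<noteq> snd (ends G e)) \<and>
     (\<forall>e1 \<in> edgs G. \<forall>e2 \<in> edgs G. e1 \<noteq> e2 \<longrightarrow>
        {fst (ends G e1), snd (ends G e1)} \<noteq> {fst (ends G e2), snd (ends G e2)})"

text \<open>Degree (a loop counts twice).\<close>
definition degree :: "('v, 'e) mgraph \<Rightarrow> 'v \<Rightarrow> nat" where
  "degree G v = card {e \<in> edgs G. fst (ends G e) = v} + card {e \<in> edgs G. snd (ends G e) = v}"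

definition joins :: "('v, 'e) mgraph \<Rightarrow> 'e \<Rightarrow> 'v \<Rightarrow> 'v \<Rightarrow> bool" where
  "joins G e x y \<longleftrightarrow> e \<in> edgs G \<and> (ends G e = (x, y) \<or> ends G e = (y, x))"

definition is_path :: "('v, 'e) mgraph \<Rightarrow> 'v \<Rightarrow> 'v \<Rightarrow> 'v list \<Rightarrow> 'e list \<Rightarrow> bool" where
  "is_path G u v vs es \<longleftrightarrow>
     length vs = Suc (length es) \<and> set vs \<subseteq> verts G \<and> distinct vs \<and>
     hd vs = u \<and> last vs = v \<and>
     (\<forall>i < length es. joins G (es ! i) (vs ! i) (vs ! Suc i))"

definition internal :: "'v list \<Rightarrow> 'v set" where
  "internal vs = set (butlast (tl vs))"

definition triconnected :: "('v, 'e) mgraph \<Rightarrow> 'v \<Rightarrow> 'v \<Rightarrow> bool" where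
  "triconnected G u v \<longleftrightarrow>
     (\<exists>vs1 es1 vs2 es2 vs3 es3.
        is_path G u v vs1 es1 \<and> is_path G u v vs2 es2 \<and> is_path G u v vs3 es3 \<and>
        es1 \<noteq> es2 \<and> es1 \<noteq> es3 \<and> es2 \<noteq> es3 \<and>
        internal vs1 \<inter> internal vs2 = {} \<and> internal vs1 \<inter> internal vs3 = {} \<and>
        internal vs2 \<inter> internal vs3 = {})"

definition Q_triconnected :: "('v, 'e) mgraph \<Rightarrow> 'v set \<Rightarrow> bool" where
  "Q_triconnected G Q \<longleftrightarrow> Q \<subseteq> verts G \<and>
     (\<forall>u \<in> Q. \<forall>v \<in> Q. u \<noteq> v \<longrightarrow> triconnected G u v)"

definition del_edge :: "('v, 'e) mgraph \<Rightarrow> 'e \<Rightarrow> ('v, 'e) mgraph" where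
  "del_edge G e = G\<lparr>edgs := edgs G - {e}\<rparr>"

definition del_vertex :: "('v, 'e) mgraph \<Rightarrow> 'v \<Rightarrow> ('v, 'e) mgraph" where
  "del_vertex G x = G\<lparr>verts := verts G - {x},
     edgs := {e \<in> edgs G. fst (ends G e) \<noteq> x \<and> snd (ends G e) \<noteq> x}\<rparr>"

definition minimal_Q_triconnected :: "('v, 'e) mgraph \<Rightarrow> 'v set \<Rightarrow> bool" where
  "minimal_Q_triconnected G Q \<longleftrightarrow> Q_triconnected G Q \<and>
     (\<forall>e \<in> edgs G. \<not> Q_triconnected (del_edge G e) Q) \<and>
     (\<forall>x \<in> verts G. \<not> Q_triconnected (del_vertex G x) Q)"

text \<open>One contraction step: a vertex v of degree two with its two (distinct, non-loop)
  incident edges e1 = vu and e2 = vw; contracting e2 merges v into w, so that e1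
  becomes an edge uw (possibly parallel to an existing edge, or a loop if u = w).\<close>
definition contract_step :: "('v, 'e) mgraph \<Rightarrow> ('v, 'e) mgraph \<Rightarrow> bool" where
  "contract_step G G' \<longleftrightarrow>
     (\<exists>v u w e1 e2. v \<in> verts G \<and> degree G v = 2 \<and> e1 \<noteq> e2 \<and>
        u \<noteq> v \<and> w \<noteq> v \<and> joins G e1 v u \<and> joins G e2 v w \<and>
        G' = \<lparr>verts = verts G - {v}, edgs = edgs G - {e2},
              ends = (ends G)(e1 := (u, w))\<rparr>)"

definition contracted_version :: "('v, 'e) mgraph \<Rightarrow> ('v, 'e) mgraph \<Rightarrow> bool" where
  "contracted_version H H' \<longleftrightarrow> contract_step\<^sup>*\<^sup>* H H' \<and>
     (\<forall>v \<in> verts H'. degree H' v \<noteq> 2)"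

end

theory Submission
  imports Defs
begin


fun wk :: "('v, 'e) mgraph \<Rightarrow> 'v list \<Rightarrow> 'e list \<Rightarrow> bool" where
  "wk G [x] [] = True"
| "wk G (x # y # vs) (e # es) = (joins G e x y \<and> wk G (y # vs) es)"
| "wk G _ _ = False"

lemma wk_single[simp]: "wk G [x] es \<longleftrightarrow> es = []" by (cases es) auto
lemma wk_Cons2: "wk G (x # vs) (e # es) \<longleftrightarrow> vs \<noteq> [] \<and> joins G e x (hd vs) \<and> wk G vs es"
  by (cases vs) auto
lemma wk_Cons_Nil: "wk G (x # vs) [] \<longleftrightarrow> vs = []" by (cases vs) auto

lemma wk_iff: "wk G vs es \<longleftrightarrow> length vs = Suc (length es) \<and> (\<forall>i<length es. joins G (es!i) (vs!i) (vs!Suc i))"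
  by (induction G vs es rule: wk.induct) (auto simp: less_Suc_eq_0_disj)

lemma is_path_wk: "is_path G s t vs es \<longleftrightarrow> wk G vs es \<and> set vs \<subseteq> verts G \<and> distinct vs \<and> hd vs = s \<and> last vs = t"
  by (auto simp: is_path_def wk_iff)

lemma wk_split: "wk G (xs @ a # ys) es \<Longrightarrow> \<exists>es1 es2. es = es1 @ es2 \<and> wk G (xs @ [a]) es1 \<and> wk G (a # ys) es2"
proof (induction xs arbitrary: es)
  case Nil thus ?case by (intro exI[of _ "[]"] exI[of _ es]) auto
next
  case (Cons x xs)
  then obtain e es' where es: "es = e # es'" by (cases es) (auto simp: wk_Cons_Nil)
  with Cons.prems have j: "joins G e x (hd (xs @ a # ys))" and w: "wk G (xs @ a # ys) es'"
    by (auto simp: wk_Cons2)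
  from Cons.IH[OF w] obtain es1 es2 where "es' = es1 @ es2" "wk G (xs @ [a]) es1" "wk G (a # ys) es2" by blast
  then show ?case using j es by (intro exI[of _ "e # es1"] exI[of _ es2]) (auto simp: wk_Cons2 hd_append)
qed

lemma wk_app: "wk G (xs @ [a]) es1 \<Longrightarrow> wk G (a # ys) es2 \<Longrightarrow> wk G (xs @ a # ys) (es1 @ es2)"
proof (induction xs arbitrary: es1)
  case Nil thus ?case by simp
next
  case (Cons x xs)
  then obtain e es' where es: "es1 = e # es'" by (cases es1) (auto simp: wk_Cons_Nil)
  with Cons.prems have j: "joins G e x (hd (xs @ [a]))" and w: "wk G (xs @ [a]) es'"
    by (auto simp: wk_Cons2)
  from Cons.IH[OF w Cons.prems(2)] show ?case using j es by (auto simp: wk_Cons2 hd_append)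
qed

lemma wk_es_split: "wk G vs (es1 @ e # es2) \<Longrightarrow> \<exists>xs a b ys. vs = xs @ a # b # ys \<and> wk G (xs @ [a]) es1 \<and> joins G e a b \<and> wk G (b # ys) es2"
proof (induction es1 arbitrary: vs)
  case Nil
  then obtain a r where vs: "vs = a # r" by (cases vs) auto
  with Nil have "r \<noteq> []" by (auto simp: wk_Cons2)
  then obtain b ys where "r = b # ys" by (cases r) auto
  with vs Nil show ?case by (intro exI[of _ "[]"]) auto
next
  case (Cons e' es1)
  then obtain x r where vs: "vs = x # r" by (cases vs) auto
  with Cons.prems have r: "r \<noteq> []" "joins G e' x (hd r)" "wk G r (es1 @ e # es2)" by (auto simp: wk_Cons2)
  from Cons.IH[OF r(3)] obtain xs a b ys where "r = xs @ a # b # ys" "wk G (xs @ [a]) es1" "joins G e a b" "wk G (b # ys) es2" by blast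
  then show ?case using vs r by (intro exI[of _ "x # xs"]) (auto simp: wk_Cons2 hd_append)
qed

lemma wk_edge: "wk G vs es \<Longrightarrow> e \<in> set es \<Longrightarrow> \<exists>x\<in>set vs. \<exists>y\<in>set vs. joins G e x y"
  by (induction G vs es rule: wk.induct) auto

lemma wk_mono: "wk A vs es \<Longrightarrow> (\<And>e x y. e \<in> set es \<Longrightarrow> x \<in> set vs \<Longrightarrow> y \<in> set vs \<Longrightarrow> joins A e x y \<Longrightarrow> joins B e x y) \<Longrightarrow> wk B vs es"
  by (induction A vs es rule: wk.induct) auto

lemma joins_sym: "joins G e x y \<Longrightarrow> joins G e y x" by (auto simp: joins_def)
lemma joins_edg: "joins G e x y \<Longrightarrow> e \<in> edgs G" by (auto simp: joins_def)

lemma internal_ins: "internal (xs @ a # v # b # ys) = insert v (internal (xs @ a # b # ys))"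
  by (cases xs) (auto simp: internal_def butlast_append)

lemma set_cls: "x \<in> set vs \<Longrightarrow> x = hd vs \<or> x = last vs \<or> x \<in> internal vs"
proof (cases vs)
  case (Cons a r)
  assume x: "x \<in> set vs"
  show ?thesis
  proof (cases "x = a")
    case False
    with x Cons have xr: "x \<in> set r" "r \<noteq> []" by auto
    hence "x \<in> set (butlast r) \<or> x = last r"
      by (metis append_butlast_last_id in_set_conv_decomp_last rotate1.simps(2) set_rotate1 set_ConsD)
    thus ?thesis using Cons xr by (auto simp: internal_def)
  next
    case True thus ?thesis using Cons by simp
  qed
qed simp

definition R where "R M v mk vs es vs' es' \<longleftrightarrow> (\<not> M vs es \<and> vs' = vs \<and> es' = es \<and> v \<notin> internal vs \<and> mk \<notin> set es) \<or> (M vs es \<and> internal vs' \<subseteq> insert v (internal vs) \<and> mk \<in> set es')"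

lemma R_pair: "R M v mk va ea va' ea' \<Longrightarrow> R M v mk vb eb vb' eb' \<Longrightarrow> \<not>(M va ea \<and> M vb eb) \<Longrightarrow> ea \<noteq> eb \<Longrightarrow> internal va \<inter> internal vb = {} \<Longrightarrow> ea' \<noteq> eb' \<and> internal va' \<inter> internal vb' = {}"
  by (auto simp: R_def)

lemma tri_gen:
  assumes tri: "triconnected A s t"
  and mp: "\<And>vs es. is_path A s t vs es \<Longrightarrow> \<exists>vs' es'. is_path B s t vs' es' \<and> R M v mk vs es vs' es'"
  and ex: "\<And>vs es vs2 es2. is_path A s t vs es \<Longrightarrow> is_path A s t vs2 es2 \<Longrightarrow> M vs es \<Longrightarrow> M vs2 es2 \<Longrightarrow> es \<noteq> es2 \<Longrightarrow> internal vs \<inter> internal vs2 = {} \<Longrightarrow> False"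
  shows "triconnected B s t"
proof -
  obtain vs1 es1 vs2 es2 vs3 es3 where P:
    "is_path A s t vs1 es1" "is_path A s t vs2 es2" "is_path A s t vs3 es3"
    "es1 \<noteq> es2" "es1 \<noteq> es3" "es2 \<noteq> es3"
    "internal vs1 \<inter> internal vs2 = {}" "internal vs1 \<inter> internal vs3 = {}"
    "internal vs2 \<inter> internal vs3 = {}"
    using tri unfolding triconnected_def by blast
  obtain a1 b1 where 1: "is_path B s t a1 b1" "R M v mk vs1 es1 a1 b1" using mp[OF P(1)] by blast
  obtain a2 b2 where 2: "is_path B s t a2 b2" "R M v mk vs2 es2 a2 b2" using mp[OF P(2)] by blast
  obtain a3 b3 where 3: "is_path B s t a3 b3" "R M v mk vs3 es3 a3 b3" using mp[OF P(3)] by blast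
  have n12: "\<not>(M vs1 es1 \<and> M vs2 es2)" using ex P by blast
  have n13: "\<not>(M vs1 es1 \<and> M vs3 es3)" using ex P by blast
  have n23: "\<not>(M vs2 es2 \<and> M vs3 es3)" using ex P by blast
  show ?thesis unfolding triconnected_def
    using 1 2 3 R_pair[OF 1(2) 2(2) n12 P(4) P(7)] R_pair[OF 1(2) 3(2) n13 P(5) P(8)]
      R_pair[OF 2(2) 3(2) n23 P(6) P(9)] by blast
qed



lemma internal_sub: "internal vs \<subseteq> set vs"
  unfolding internal_def by (cases vs) (auto dest: in_set_butlastD)

lemma st_edge:
  assumes P: "is_path A s t vs es" and vs: "vs = xs @ a # b # ys"
    and w1: "wk A (xs @ [a]) es1" and w2: "wk A (b # ys) es2" and es: "es = es1 @ e # es2"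
    and ab: "a \<in> {s, t}" "b \<in> {s, t}"
  shows "es = [e]"
proof -
  from P have d: "distinct vs" and h: "hd vs = s" and l: "last vs = t" by (auto simp: is_path_wk)
  have lb: "last (b # ys) = t" using l vs by simp
  have aneb: "a \<noteq> b" using d vs by auto
  have "a \<noteq> t"
  proof
    assume "a = t"
    moreover have "last (b # ys) \<in> set (b # ys)" by (rule last_in_set) simp
    moreover have "a \<notin> set (b # ys)" using d vs by auto
    ultimately show False using lb by simp
  qed
  hence as: "a = s" and bt: "b = t" using ab aneb by auto
  have "xs = []"
  proof (rule ccontr)
    assume "xs \<noteq> []"
    hence "hd xs = a" "hd xs \<in> set xs" using h vs as by auto
    moreover have "a \<notin> set xs" using d vs by auto
    ultimately show False by simp
  qed
  moreover have "ys = []"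
  proof (rule ccontr)
    assume ne: "ys \<noteq> []"
    hence "last ys = b" "last ys \<in> set ys" using lb bt by auto
    moreover have "b \<notin> set ys" using d vs by auto
    ultimately show False by simp
  qed
  ultimately show ?thesis using w1 w2 es by simp
qed

lemma bwd_path:
  assumes P: "is_path A s t vs es"
  and VA: "verts A \<subseteq> verts B" and vB: "v \<in> verts B" and vA: "v \<notin> verts A"
  and jA: "\<And>e x y. joins A e x y \<Longrightarrow> e \<noteq> e1 \<Longrightarrow> joins B e x y"
  and jE: "\<And>x y. joins A e1 x y \<Longrightarrow> ((x = u \<and> y = w) \<or> (x = w \<and> y = u)) \<and> joins B e1 v u \<and> joins B e2 v w"
  and e2A: "e2 \<notin> edgs A"
  shows "\<exists>vs' es'. is_path B s t vs' es' \<and> R (\<lambda>vs es. e1 \<in> set es) v e2 vs es vs' es'"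
proof -
  from P have wA: "wk A vs es" and sv: "set vs \<subseteq> verts A" and d: "distinct vs"
    and h: "hd vs = s" and l: "last vs = t" by (auto simp: is_path_wk)
  have vn: "v \<notin> set vs" using sv vA by auto
  show ?thesis
  proof (cases "e1 \<in> set es")
    case False
    have "wk B vs es" using wA by (rule wk_mono) (use jA False in auto)
    moreover have "e2 \<notin> set es" using wk_edge[OF wA] e2A joins_edg by metis
    moreover have "v \<notin> internal vs" using vn internal_sub[of vs] by blast
    ultimately show ?thesis using False P VA
      by (intro exI[of _ vs] exI[of _ es]) (auto simp: R_def is_path_wk)
  next
    case True
    then obtain es1 es2 where es: "es = es1 @ e1 # es2" "e1 \<notin> set es1"
      by (metis split_list_first)
    from wk_es_split[OF wA[unfolded es(1)]] obtain xs a b ys where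
      D: "vs = xs @ a # b # ys" "wk A (xs @ [a]) es1" "joins A e1 a b" "wk A (b # ys) es2" by blast
    note J = jE[OF D(3)]
    have n2: "e1 \<notin> set es2"
    proof
      assume "e1 \<in> set es2"
      from wk_edge[OF D(4) this] obtain c d where "c \<in> set (b # ys)" "d \<in> set (b # ys)" "joins A e1 c d" by blast
      hence cd: "(c = u \<and> d = w) \<or> (c = w \<and> d = u)" using jE by blast
      have "a \<in> set (b # ys)" using J cd \<open>c \<in> set (b # ys)\<close> \<open>d \<in> set (b # ys)\<close> by auto
      thus False using d D(1) by auto
    qed
    have w1: "wk B (xs @ [a]) es1" using D(2) by (rule wk_mono) (use jA es(2) in auto)
    have w2: "wk B (b # ys) es2" using D(4) by (rule wk_mono) (use jA n2 in auto)
    obtain ea eb where E: "joins B ea a v" "joins B eb v b" "e2 \<in> {ea, eb}"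
    proof (cases "a = u \<and> b = w")
      case True thus ?thesis using J that[of e1 e2] joins_sym[of B e1 v u] by auto
    next
      case False
      hence "a = w" "b = u" using J by auto
      thus ?thesis using J that[of e2 e1] joins_sym[of B e2 v w] by auto
    qed
    have "wk B (xs @ a # (v # b # ys)) (es1 @ (ea # eb # es2))"
      using w1 w2 E by (intro wk_app) auto
    moreover have "set (xs @ a # v # b # ys) \<subseteq> verts B" using sv VA vB D(1) by auto
    moreover have "distinct (xs @ a # v # b # ys)" using d vn D(1) by auto
    moreover have "hd (xs @ a # v # b # ys) = s" using h D(1) by (cases xs) auto
    moreover have "last (xs @ a # v # b # ys) = t" using l D(1) by simp
    moreover have "internal (xs @ a # v # b # ys) \<subseteq> insert v (internal vs)"
      using D(1) internal_ins[of xs a v b ys] by simp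
    ultimately show ?thesis using True E(3)
      by (intro exI[of _ "xs @ a # v # b # ys"] exI[of _ "es1 @ ea # eb # es2"])
         (auto simp: R_def is_path_wk)
  qed
qed

lemma bwd_one:
  assumes P: "is_path A s t vs es" and e: "e1 \<in> set es"
  and jE: "\<And>x y. joins A e1 x y \<Longrightarrow> ((x = u \<and> y = w) \<or> (x = w \<and> y = u))"
  and us: "u \<in> {s, t}" and ws: "w \<in> {s, t}"
  shows "es = [e1]"
proof -
  from P have wA: "wk A vs es" by (auto simp: is_path_wk)
  from e obtain es1 es2 where es: "es = es1 @ e1 # es2" by (metis split_list)
  from wk_es_split[OF wA[unfolded es]] obtain xs a b ys where
    D: "vs = xs @ a # b # ys" "wk A (xs @ [a]) es1" "joins A e1 a b" "wk A (b # ys) es2" by blast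
  have "a \<in> {s,t}" "b \<in> {s,t}" using jE[OF D(3)] us ws by auto
  from st_edge[OF P D(1) D(2) D(4) es this] show ?thesis .
qed

lemma bwd_ex:
  assumes P1: "is_path A s t vs es" and P2: "is_path A s t vs2 es2"
  and e: "e1 \<in> set es" "e1 \<in> set es2" and ne: "es \<noteq> es2"
  and dj: "internal vs \<inter> internal vs2 = {}"
  and jE: "\<And>x y. joins A e1 x y \<Longrightarrow> ((x = u \<and> y = w) \<or> (x = w \<and> y = u))"
  shows False
proof -
  from P1 have wA: "wk A vs es" and h1: "hd vs = s" "last vs = t" by (auto simp: is_path_wk)
  from P2 have wA2: "wk A vs2 es2" and h2: "hd vs2 = s" "last vs2 = t" by (auto simp: is_path_wk)
  obtain x y where "x \<in> set vs" "y \<in> set vs" "joins A e1 x y" using wk_edge[OF wA e(1)] by blast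
  hence uw1: "u \<in> set vs" "w \<in> set vs" using jE by auto
  obtain x y where "x \<in> set vs2" "y \<in> set vs2" "joins A e1 x y" using wk_edge[OF wA2 e(2)] by blast
  hence uw2: "u \<in> set vs2" "w \<in> set vs2" using jE by auto
  have "u \<in> {s,t}" using set_cls[OF uw1(1)] set_cls[OF uw2(1)] h1 h2 dj by auto
  moreover have "w \<in> {s,t}" using set_cls[OF uw1(2)] set_cls[OF uw2(2)] h1 h2 dj by auto
  ultimately have "es = [e1]" "es2 = [e1]" using bwd_one[OF P1 e(1) jE] bwd_one[OF P2 e(2) jE] by auto
  with ne show False by simp
qed

lemma lift_Q:
  assumes QA: "Q_triconnected A Q"
  and VA: "verts A \<subseteq> verts B" and vB: "v \<in> verts B" and vA: "v \<notin> verts A"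
  and jA: "\<And>e x y. joins A e x y \<Longrightarrow> e \<noteq> e1 \<Longrightarrow> joins B e x y"
  and jE: "\<And>x y. joins A e1 x y \<Longrightarrow> ((x = u \<and> y = w) \<or> (x = w \<and> y = u)) \<and> joins B e1 v u \<and> joins B e2 v w"
  and e2A: "e2 \<notin> edgs A"
  shows "Q_triconnected B Q"
  unfolding Q_triconnected_def
proof (intro conjI ballI impI)
  show "Q \<subseteq> verts B" using QA VA by (auto simp: Q_triconnected_def)
  fix s t assume st: "s \<in> Q" "t \<in> Q" "s \<noteq> t"
  have "triconnected A s t" using QA st by (auto simp: Q_triconnected_def)
  thus "triconnected B s t"
  proof (rule tri_gen[where M = "\<lambda>vs es. e1 \<in> set es" and v = v and mk = e2])
    fix vs es assume "is_path A s t vs es"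
    from bwd_path[OF this VA vB vA jA jE e2A] show "\<exists>vs' es'. is_path B s t vs' es' \<and> R (\<lambda>vs es. e1 \<in> set es) v e2 vs es vs' es'" .
  next
    fix vs es vs2 es2 assume "is_path A s t vs es" "is_path A s t vs2 es2" "e1 \<in> set es" "e1 \<in> set es2"
      "es \<noteq> es2" "internal vs \<inter> internal vs2 = {}"
    from bwd_ex[OF this] jE show False by blast
  qed
qed



locale cs =
  fixes G :: "('v, 'e) mgraph" and Q :: "'v set" and v u w :: 'v and e1 e2 :: 'e
  assumes fin: "finite (edgs G)" and mn: "minimal_Q_triconnected G Q"
  and vV: "v \<in> verts G" and deg: "degree G v = 2" and e12: "e1 \<noteq> e2"
  and uv: "u \<noteq> v" and wv: "w \<noteq> v" and j1: "joins G e1 v u" and j2: "joins G e2 v w"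
begin

lemma QT: "Q_triconnected G Q" using mn by (simp add: minimal_Q_triconnected_def)

lemma inc: assumes "e \<in> edgs G" "fst (ends G e) = v \<or> snd (ends G e) = v" shows "e = e1 \<or> e = e2"
proof (rule ccontr)
  assume ne: "\<not> ?thesis"
  define A where "A = {e \<in> edgs G. fst (ends G e) = v}"
  define B where "B = {e \<in> edgs G. snd (ends G e) = v}"
  have fA: "finite A" "finite B" using fin by (auto simp: A_def B_def)
  have "{e1, e2, e} \<subseteq> A \<union> B" using j1 j2 assms by (auto simp: joins_def A_def B_def)
  hence "card {e1,e2,e} \<le> card (A \<union> B)" using fA by (intro card_mono) auto
  moreover have "card {e1,e2,e} = 3" using ne e12 by auto
  moreover have "card A + card B = card (A \<union> B) + card (A \<inter> B)" using fA by (rule card_Un_Int)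
  ultimately have "card A + card B \<ge> 3" by linarith
  thus False using deg by (simp add: degree_def A_def B_def)
qed

lemma jv: assumes "joins G e x v" shows "(e = e1 \<and> x = u) \<or> (e = e2 \<and> x = w)"
proof -
  have "e \<in> edgs G" "fst (ends G e) = v \<or> snd (ends G e) = v" using assms by (auto simp: joins_def)
  from inc[OF this] show ?thesis using assms j1 j2 uv wv by (auto simp: joins_def)
qed

lemma e_inc: "joins G e1 x y \<Longrightarrow> x = v \<or> y = v" "joins G e2 x y \<Longrightarrow> x = v \<or> y = v"
  using j1 j2 by (auto simp: joins_def)

lemma QQ: "\<exists>s\<in>Q. \<exists>t\<in>Q. s \<noteq> t"
proof -
  have "e1 \<in> edgs G" using j1 by (simp add: joins_def)
  hence "\<not> Q_triconnected (del_edge G e1) Q" using mn by (auto simp: minimal_Q_triconnected_def)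
  moreover have "Q \<subseteq> verts (del_edge G e1)" using QT by (auto simp: Q_triconnected_def del_edge_def)
  ultimately show ?thesis by (auto simp: Q_triconnected_def)
qed

lemma first_edge: assumes "is_path G v t vs es" "t \<noteq> v"
  shows "\<exists>b ys eb es2. vs = v # b # ys \<and> es = eb # es2 \<and> ((eb = e1 \<and> b = u) \<or> (eb = e2 \<and> b = w)) \<and> wk G (b # ys) es2"
proof -
  from assms have w: "wk G vs es" "hd vs = v" "last vs = t" by (auto simp: is_path_wk)
  then obtain r where vs: "vs = v # r" by (cases vs) auto
  with w assms have "r \<noteq> []" by auto
  then obtain b ys where r: "r = b # ys" by (cases r) auto
  from w vs r obtain eb es2 where es: "es = eb # es2" by (cases es) auto
  from w vs r es have jj: "joins G eb v b" and ww: "wk G (b # ys) es2" by auto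
  from jv[OF joins_sym[OF jj]] ww show ?thesis using vs r es by blast
qed

lemma not_tri_v: assumes tv: "t \<noteq> v" shows "\<not> triconnected G v t"
proof
  assume "triconnected G v t"
  then obtain vs1 es1 vs2 es2 vs3 es3 where P:
    "is_path G v t vs1 es1" "is_path G v t vs2 es2" "is_path G v t vs3 es3"
    "es1 \<noteq> es2" "es1 \<noteq> es3" "es2 \<noteq> es3"
    "internal vs1 \<inter> internal vs2 = {}" "internal vs1 \<inter> internal vs3 = {}"
    "internal vs2 \<inter> internal vs3 = {}"
    unfolding triconnected_def by blast
  have key: False if T: "is_path G v t va ea" "is_path G v t vb eb" "ea \<noteq> eb"
    "internal va \<inter> internal vb = {}" "hd ea = hd eb" for va ea vb eb
  proof -
    obtain b ys x es2 where A: "va = v # b # ys" "ea = x # es2" "(x = e1 \<and> b = u) \<or> (x = e2 \<and> b = w)" "wk G (b # ys) es2"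
      using first_edge[OF T(1) tv] by blast
    obtain b' ys' x' es2' where B: "vb = v # b' # ys'" "eb = x' # es2'" "(x' = e1 \<and> b' = u) \<or> (x' = e2 \<and> b' = w)" "wk G (b' # ys') es2'"
      using first_edge[OF T(2) tv] by blast
    have xx: "x = x'" using T(5) A B by simp
    hence bb: "b = b'" using A B e12 by auto
    from T(1) A have d1: "distinct (b # ys)" "last (b # ys) = t" by (auto simp: is_path_wk)
    from T(2) B have d2: "distinct (b' # ys')" "last (b' # ys') = t" by (auto simp: is_path_wk)
    show False
    proof (cases "b = t")
      case True
      have "ys = []"
      proof (rule ccontr)
        assume "ys \<noteq> []" thus False using d1 True by (metis distinct.simps(2) last_ConsR last_in_set)
      qed
      moreover have "ys' = []"
      proof (rule ccontr)
        assume "ys' \<noteq> []" thus False using d2 True bb by (metis distinct.simps(2) last_ConsR last_in_set)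
      qed
      ultimately show False using A B xx T(3) by simp
    next
      case False
      hence "ys \<noteq> []" "ys' \<noteq> []" using d1 d2 bb by auto
      hence "b \<in> internal va" "b \<in> internal vb" using A B bb by (auto simp: internal_def)
      thus False using T(4) by blast
    qed
  qed
  have h: "hd es1 \<in> {e1,e2}" "hd es2 \<in> {e1,e2}" "hd es3 \<in> {e1,e2}"
    using first_edge[OF P(1) tv] first_edge[OF P(2) tv] first_edge[OF P(3) tv] by auto
  show False
  proof (cases "hd es1 = hd es2")
    case True thus False using key[OF P(1) P(2) P(4) P(7)] by simp
  next
    case F1: False
    show False
    proof (cases "hd es1 = hd es3")
      case True thus False using key[OF P(1) P(3) P(5) P(8)] by simp
    next
      case False
      hence "hd es2 = hd es3" using F1 h by auto
      thus False using key[OF P(2) P(3) P(6) P(9)] by simp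
    qed
  qed
qed

lemma vQ: "v \<notin> Q"
proof
  assume vq: "v \<in> Q"
  from QQ obtain t where "t \<in> Q" "t \<noteq> v" by blast
  hence "triconnected G v t" using QT vq by (auto simp: Q_triconnected_def)
  with not_tri_v[OF \<open>t \<noteq> v\<close>] show False by simp
qed

lemma path_through:
  assumes "wk G vs es" "distinct vs" "v \<in> set vs" "hd vs \<noteq> v" "last vs \<noteq> v"
  shows "\<exists>xs a b ys es1 es2 ea eb. vs = xs @ a # v # b # ys \<and> es = es1 @ ea # eb # es2 \<and>
     wk G (xs @ [a]) es1 \<and> wk G (b # ys) es2 \<and>
     ((a = u \<and> b = w \<and> ea = e1 \<and> eb = e2) \<or> (a = w \<and> b = u \<and> ea = e2 \<and> eb = e1))"
proof -
  obtain xs0 ys0 where vs: "vs = xs0 @ v # ys0" using assms(3) by (metis split_list)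
  have "xs0 \<noteq> []" using vs assms(4) by auto
  then obtain xs a where xs0: "xs0 = xs @ [a]" by (metis rev_exhaust)
  have "ys0 \<noteq> []" using vs assms(5) by auto
  then obtain b ys where ys0: "ys0 = b # ys" by (cases ys0) auto
  have vs2: "vs = xs @ a # (v # b # ys)" using vs xs0 ys0 by simp
  from wk_split[OF assms(1)[unfolded vs2]] obtain es1 es' where
    S: "es = es1 @ es'" "wk G (xs @ [a]) es1" "wk G (a # v # b # ys) es'" by blast
  obtain ea r where r: "es' = ea # r" using S(3) by (cases es') (auto simp: wk_Cons_Nil)
  obtain eb es2 where "r = eb # es2" using S(3) r by (cases r) (auto simp: wk_Cons_Nil)
  with r have es': "es' = ea # eb # es2" by simp
  with S have J: "joins G ea a v" "joins G eb v b" "wk G (b # ys) es2" by auto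
  have ab: "a \<noteq> b" using assms(2) vs2 by auto
  from jv[OF J(1)] jv[OF joins_sym[OF J(2)]] ab have
    "(a = u \<and> b = w \<and> ea = e1 \<and> eb = e2) \<or> (a = w \<and> b = u \<and> ea = e2 \<and> eb = e1)" by auto
  thus ?thesis using vs2 S es' J by blast
qed

lemma uw: "u \<noteq> w"
proof
  assume uw: "u = w"
  have avoid: "is_path (del_vertex G v) s t vs es" if P: "is_path G s t vs es" "s \<noteq> v" "t \<noteq> v" for s t vs es
  proof -
    from P have W: "wk G vs es" "set vs \<subseteq> verts G" "distinct vs" "hd vs = s" "last vs = t"
      by (auto simp: is_path_wk)
    have vn: "v \<notin> set vs"
    proof
      assume "v \<in> set vs"
      from path_through[OF W(1) W(3) this] W P obtain xs a b ys where "vs = xs @ a # v # b # ys" "a = b"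
        using uw by fastforce
      thus False using W(3) by auto
    qed
    have "wk (del_vertex G v) vs es" using W(1)
    proof (rule wk_mono)
      fix e x y assume "x \<in> set vs" "y \<in> set vs" "joins G e x y"
      thus "joins (del_vertex G v) e x y" using vn by (auto simp: joins_def del_vertex_def)
    qed
    thus ?thesis using W vn by (auto simp: is_path_wk del_vertex_def)
  qed
  have "Q_triconnected (del_vertex G v) Q"
    unfolding Q_triconnected_def
  proof (intro conjI ballI impI)
    show "Q \<subseteq> verts (del_vertex G v)" using QT vQ by (auto simp: Q_triconnected_def del_vertex_def)
    fix s t assume st: "s \<in> Q" "t \<in> Q" "s \<noteq> t"
    hence sv: "s \<noteq> v" "t \<noteq> v" using vQ by auto
    from st QT have "triconnected G s t" by (auto simp: Q_triconnected_def)
    then obtain vs1 es1 vs2 es2 vs3 es3 where P: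
      "is_path G s t vs1 es1" "is_path G s t vs2 es2" "is_path G s t vs3 es3"
      "es1 \<noteq> es2" "es1 \<noteq> es3" "es2 \<noteq> es3"
      "internal vs1 \<inter> internal vs2 = {}" "internal vs1 \<inter> internal vs3 = {}"
      "internal vs2 \<inter> internal vs3 = {}"
      unfolding triconnected_def by blast
    show "triconnected (del_vertex G v) s t" unfolding triconnected_def
      using avoid[OF P(1) sv] avoid[OF P(2) sv] avoid[OF P(3) sv] P(4-9) by blast
  qed
  with mn vV show False by (auto simp: minimal_Q_triconnected_def)
qed

end


context cs begin

definition G' :: "('v, 'e) mgraph" where
  "G' = \<lparr>verts = verts G - {v}, edgs = edgs G - {e2}, ends = (ends G)(e1 := (u, w))\<rparr>"

lemma G'_simps[simp]: "verts G' = verts G - {v}" "edgs G' = edgs G - {e2}" "ends G' = (ends G)(e1 := (u, w))"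
  by (simp_all add: G'_def)

lemma fwd_path:
  assumes P: "is_path G s t vs es" and sv: "s \<noteq> v" "t \<noteq> v"
  shows "\<exists>vs' es'. is_path G' s t vs' es' \<and> R (\<lambda>vs es. v \<in> set vs) v e1 vs es vs' es'"
proof -
  from P have W: "wk G vs es" "set vs \<subseteq> verts G" "distinct vs" "hd vs = s" "last vs = t"
    by (auto simp: is_path_wk)
  have tr: "joins G' e x y" if "joins G e x y" "x \<noteq> v" "y \<noteq> v" for e x y
  proof -
    have "e \<noteq> e1" "e \<noteq> e2" using e_inc that by blast+
    thus ?thesis using that by (auto simp: joins_def)
  qed
  show ?thesis
  proof (cases "v \<in> set vs")
    case False
    have "wk G' vs es" using W(1) by (rule wk_mono) (use tr False in blast)
    moreover have "e1 \<notin> set es" using wk_edge[OF W(1)] e_inc(1) False by metis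
    moreover have "v \<notin> internal vs" using False internal_sub[of vs] by blast
    ultimately show ?thesis using False W
      by (intro exI[of _ vs] exI[of _ es]) (auto simp: R_def is_path_wk)
  next
    case True
    from path_through[OF W(1) W(3) True] W sv obtain xs a b ys es1 es2 ea eb where
      D: "vs = xs @ a # v # b # ys" "es = es1 @ ea # eb # es2" "wk G (xs @ [a]) es1" "wk G (b # ys) es2"
      "(a = u \<and> b = w \<and> ea = e1 \<and> eb = e2) \<or> (a = w \<and> b = u \<and> ea = e2 \<and> eb = e1)"
      by metis
    have dd: "distinct (xs @ a # v # b # ys)" using W(3) D(1) by simp
    have w1: "wk G' (xs @ [a]) es1" using D(3)
    proof (rule wk_mono)
      fix e x y assume "x \<in> set (xs @ [a])" "y \<in> set (xs @ [a])" "joins G e x y"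
      moreover have "v \<notin> set (xs @ [a])" using dd by auto
      ultimately show "joins G' e x y" using tr by metis
    qed
    have w2: "wk G' (b # ys) es2" using D(4)
    proof (rule wk_mono)
      fix e x y assume "x \<in> set (b # ys)" "y \<in> set (b # ys)" "joins G e x y"
      moreover have "v \<notin> set (b # ys)" using dd by auto
      ultimately show "joins G' e x y" using tr by metis
    qed
    have e1E: "e1 \<in> edgs G" using j1 joins_edg by metis
    have jab: "joins G' e1 a b" using D(5) e1E e12 by (auto simp: joins_def)
    have "wk G' (xs @ a # (b # ys)) (es1 @ (e1 # es2))"
      using w1 w2 jab by (intro wk_app) auto
    moreover have "set (xs @ a # b # ys) \<subseteq> verts G'" using W(2) D(1) dd by auto
    moreover have "distinct (xs @ a # b # ys)" using dd by auto
    moreover have "hd (xs @ a # b # ys) = s" using W(4) D(1) by (cases xs) auto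
    moreover have "last (xs @ a # b # ys) = t" using W(5) D(1) by simp
    moreover have "internal (xs @ a # b # ys) \<subseteq> insert v (internal vs)"
      using D(1) internal_ins[of xs a v b ys] by auto
    ultimately show ?thesis using True
      by (intro exI[of _ "xs @ a # b # ys"] exI[of _ "es1 @ e1 # es2"])
         (auto simp: R_def is_path_wk)
  qed
qed

lemma QT': "Q_triconnected G' Q"
  unfolding Q_triconnected_def
proof (intro conjI ballI impI)
  show "Q \<subseteq> verts G'" using QT vQ by (auto simp: Q_triconnected_def)
  fix s t assume st: "s \<in> Q" "t \<in> Q" "s \<noteq> t"
  hence sv: "s \<noteq> v" "t \<noteq> v" using vQ by auto
  have "triconnected G s t" using QT st by (auto simp: Q_triconnected_def)
  thus "triconnected G' s t"
  proof (rule tri_gen[where M = "\<lambda>vs es. v \<in> set vs" and v = v and mk = e1])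
    fix vs es assume "is_path G s t vs es"
    from fwd_path[OF this sv] show "\<exists>vs' es'. is_path G' s t vs' es' \<and> R (\<lambda>vs es. v \<in> set vs) v e1 vs es vs' es'" .
  next
    fix vs es vs2 es2 assume A: "is_path G s t vs es" "is_path G s t vs2 es2" "v \<in> set vs" "v \<in> set vs2"
      "es \<noteq> es2" "internal vs \<inter> internal vs2 = {}"
    from A(1,2) have "hd vs = s" "last vs = t" "hd vs2 = s" "last vs2 = t" by (auto simp: is_path_wk)
    hence "v \<in> internal vs" "v \<in> internal vs2" using set_cls[OF A(3)] set_cls[OF A(4)] sv by auto
    thus False using A(6) by blast
  qed
qed

lemma minimal': "minimal_Q_triconnected G' Q"
  unfolding minimal_Q_triconnected_def
proof (intro conjI ballI)
  show "Q_triconnected G' Q" by (rule QT')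
next
  fix e assume eE: "e \<in> edgs G'"
  have ne2: "e2 \<noteq> e" using eE by auto
  have H1: "verts (del_edge G' e) \<subseteq> verts (del_edge G e)" by (auto simp: del_edge_def)
  have H2: "v \<in> verts (del_edge G e)" using vV by (auto simp: del_edge_def)
  have H3: "v \<notin> verts (del_edge G' e)" by (auto simp: del_edge_def)
  have H4: "\<And>e' x y. joins (del_edge G' e) e' x y \<Longrightarrow> e' \<noteq> e1 \<Longrightarrow> joins (del_edge G e) e' x y"
    by (auto simp: joins_def del_edge_def)
  have H5: "((x = u \<and> y = w) \<or> (x = w \<and> y = u)) \<and> joins (del_edge G e) e1 v u \<and> joins (del_edge G e) e2 v w"
    if T: "joins (del_edge G' e) e1 x y" for x y
  proof -
    have ne: "e1 \<noteq> e" using T by (auto simp: joins_def del_edge_def)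
    have "ends (del_edge G' e) e1 = (u, w)" by (simp add: del_edge_def)
    hence o: "(x = u \<and> y = w) \<or> (x = w \<and> y = u)" using T unfolding joins_def by auto
    have a: "joins (del_edge G e) e1 v u" using j1 ne unfolding joins_def del_edge_def by simp
    have b: "joins (del_edge G e) e2 v w" using j2 ne2 unfolding joins_def del_edge_def by simp
    show ?thesis using o a b by blast
  qed
  have H6: "e2 \<notin> edgs (del_edge G' e)" by (auto simp: del_edge_def)
  show "\<not> Q_triconnected (del_edge G' e) Q"
  proof
    assume A: "Q_triconnected (del_edge G' e) Q"
    have C: "Q_triconnected (del_edge G e) Q"
      using lift_Q[OF A H1 H2 H3 H4 H5 H6] .
    have "e \<in> edgs G" using eE by simp
    thus False using mn C by (auto simp: minimal_Q_triconnected_def)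
  qed
next
  fix x assume xV: "x \<in> verts G'"
  have xv: "x \<noteq> v" using xV by simp
  have H1: "verts (del_vertex G' x) \<subseteq> verts (del_vertex G x)" by (auto simp: del_vertex_def)
  have H2: "v \<in> verts (del_vertex G x)" using vV xv by (auto simp: del_vertex_def)
  have H3: "v \<notin> verts (del_vertex G' x)" by (auto simp: del_vertex_def)
  have H4: "\<And>e' a b. joins (del_vertex G' x) e' a b \<Longrightarrow> e' \<noteq> e1 \<Longrightarrow> joins (del_vertex G x) e' a b"
    by (auto simp: joins_def del_vertex_def)
  have H5: "((a = u \<and> b = w) \<or> (a = w \<and> b = u)) \<and> joins (del_vertex G x) e1 v u \<and> joins (del_vertex G x) e2 v w"
    if T: "joins (del_vertex G' x) e1 a b" for a b
  proof -
    have m: "e1 \<in> edgs (del_vertex G' x)" using T by (simp add: joins_def)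
    have ux: "u \<noteq> x" "w \<noteq> x" using m by (auto simp: del_vertex_def)
    have "ends (del_vertex G' x) e1 = (u, w)" by (simp add: del_vertex_def)
    hence o: "(a = u \<and> b = w) \<or> (a = w \<and> b = u)" using T unfolding joins_def by auto
    have a: "joins (del_vertex G x) e1 v u" using j1 ux xv unfolding joins_def del_vertex_def by auto
    have b: "joins (del_vertex G x) e2 v w" using j2 ux xv unfolding joins_def del_vertex_def by auto
    show ?thesis using o a b by blast
  qed
  have H6: "e2 \<notin> edgs (del_vertex G' x)" by (auto simp: del_vertex_def)
  show "\<not> Q_triconnected (del_vertex G' x) Q"
  proof
    assume A: "Q_triconnected (del_vertex G' x) Q"
    have C: "Q_triconnected (del_vertex G x) Q"
      using lift_Q[OF A H1 H2 H3 H4 H5 H6] .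
    have "x \<in> verts G" using xV by simp
    thus False using mn C by (auto simp: minimal_Q_triconnected_def)
  qed
qed

end

lemma step_pres:
  assumes "finite (edgs G)" "minimal_Q_triconnected G Q" "contract_step G H"
  shows "finite (edgs H) \<and> minimal_Q_triconnected H Q"
proof -
  from assms(3) obtain v u w e1 e2 where S: "v \<in> verts G" "degree G v = 2" "e1 \<noteq> e2"
    "u \<noteq> v" "w \<noteq> v" "joins G e1 v u" "joins G e2 v w"
    "H = \<lparr>verts = verts G - {v}, edgs = edgs G - {e2}, ends = (ends G)(e1 := (u, w))\<rparr>"
    unfolding contract_step_def by blast
  interpret cs G Q v u w e1 e2 using assms S by unfold_locales auto
  have "H = G'" using S(8) by (simp add: G'_def)
  thus ?thesis using minimal' fin by simp
qed

theorem lemma4: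
  fixes H H' :: "('v, 'e) mgraph" and Q :: "'v set"
  assumes "wf_mgraph H"
    and "simple_mgraph H"
    and "minimal_Q_triconnected H Q"
    and "contracted_version H H'"
  shows "minimal_Q_triconnected H' Q"
proof -
  have r: "contract_step\<^sup>*\<^sup>* H H'" using assms(4) by (simp add: contracted_version_def)
  have "finite (edgs H') \<and> minimal_Q_triconnected H' Q"
    using r
  proof (induction rule: rtranclp_induct)
    case base thus ?case using assms(1,3) by (simp add: wf_mgraph_def)
  next
    case (step y z) thus ?case using step_pres by blast
  qed
  thus ?thesis by simp
qed

end
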